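(* Let $q$ be an acyclic Boolean conjunctive query without self-join, let $F,G\in q$, let $z\in\mathit{vars}(q)$ and let $c$ be a constant. Let $q'=q[z\mapsto c]$, $F'=F[z\mapsto c]$ and $G'=G[z\mapsto c]$. Then: (1) $q'$ is acyclic; (2) if $F'$ attacks $G'$ in the attack graph of $q'$, then $F$ attacks $G$ in the attack graph of $q$; (3) if $F'$ attacks $G'$ in the attack graph of $q'$ and the attack $F\to G$ in the attack graph of $q$ is weak, then the attack $F'\to G'$ is weak.
   Context: Atoms $R(s_1,\dots,s_n)$ have variables or constants as arguments; each relation name has a signature $[n,k]$ with primary key positions $1,\dots,k$. $\mathit{key}(F)$ is the set of variables in the primary-key positions of atom $F$, $\mathit{vars}(F)$ the set of variables of $F$. A Boolean conjunctive query $q$ is a finite set of atoms; $\mathit{vars}(q)$ its variables; it has a self-join if a relation name occurs in two of its atoms. For a query or atom $X$, $X[z\mapsto c]$ denotes the result of replacing every occurrence of variable $z$ by constant $c$. A join tree for $q$ is an undirected tree on the atoms of $q$ such that whenever a variable occurs in atoms $F$ and $G$ it occurs in every atom on the path between them; the edge between $F$ and $G$ is labeled $\mathit{vars}(F)\cap\mathit{vars}(G)$. $q$ is acyclic if it has a join tree. $\mathit{FD}(q)=\{\mathit{key}(F)\to\mathit{vars}(F)\mid F\in q\}$; $F^{+,q}=\{x\in\mathit{vars}(q)\mid \mathit{FD}(q\setminus\{F\})\models\mathit{key}(F)\to x\}$; $F^{\oplus,q}=\{x\in\mathit{vars}(q)\mid \mathit{FD}(q)\models\mathit{key}(F)\to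 x\}$. The attack graph of an acyclic $q$, computed from any join tree $\tau$ (independent of the choice), has an edge (attack) $F\to G$ for distinct atoms iff every label $L$ on the path between $F$ and $G$ in $\tau$ satisfies $L\not\subseteq F^{+,q}$. An attack $F\to G$ is weak if $\mathit{key}(G)\subseteq F^{\oplus,q}$, strong otherwise. *)

theory Defs
  imports Main
begin

datatype ('v, 'c) qterm = Var 'v | Cst 'c

datatype ('r, 'v, 'c) atom = Atom 'r "('v, 'c) qterm list"

fun rel :: "('r, 'v, 'c) atom \<Rightarrow> 'r" where
  "rel (Atom R ts) = R"

fun args :: "('r, 'v, 'c) atom \<Rightarrow> ('v, 'c) qterm list" where
  "args (Atom R ts) = ts"

text \<open>A signature assigns to each relation name a pair (n,k): arity n, primary key
  positions 1..k.\<close>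
type_synonym 'r signature = "'r \<Rightarrow> nat \<times> nat"

definition wf_atom :: "'r signature \<Rightarrow> ('r, 'v, 'c) atom \<Rightarrow> bool" where
  "wf_atom sig F \<longleftrightarrow> length (args F) = fst (sig (rel F))
      \<and> 1 \<le> snd (sig (rel F)) \<and> snd (sig (rel F)) \<le> fst (sig (rel F))"

definition wf_query :: "'r signature \<Rightarrow> ('r, 'v, 'c) atom set \<Rightarrow> bool" where
  "wf_query sig q \<longleftrightarrow> finite q \<and> (\<forall>F\<in>q. wf_atom sig F)"

definition term_vars :: "('v, 'c) qterm list \<Rightarrow> 'v set" where
  "term_vars ts = {v. Var v \<in> set ts}"

definition avars :: "('r, 'v, 'c) atom \<Rightarrow> 'v set" where
  "avars F = term_vars (args F)"

definition key :: "'r signature \<Rightarrow> ('r, 'v, 'c) atom \<Rightarrow> 'v set" where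
  "key sig F = term_vars (take (snd (sig (rel F))) (args F))"

definition qvars :: "('r, 'v, 'c) atom set \<Rightarrow> 'v set" where
  "qvars q = (\<Union>F\<in>q. avars F)"

definition self_join_free :: "('r, 'v, 'c) atom set \<Rightarrow> bool" where
  "self_join_free q \<longleftrightarrow> (\<forall>F\<in>q. \<forall>G\<in>q. rel F = rel G \<longrightarrow> F = G)"

fun subst_term :: "'v \<Rightarrow> 'c \<Rightarrow> ('v, 'c) qterm \<Rightarrow> ('v, 'c) qterm" where
  "subst_term z c (Var v) = (if v = z then Cst c else Var v)"
| "subst_term z c (Cst d) = Cst d"

fun subst_atom :: "'v \<Rightarrow> 'c \<Rightarrow> ('r, 'v, 'c) atom \<Rightarrow> ('r, 'v, 'c) atom" where
  "subst_atom z c (Atom R ts) = Atom R (map (subst_term z c) ts)"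

definition subst_query :: "'v \<Rightarrow> 'c \<Rightarrow> ('r, 'v, 'c) atom set \<Rightarrow> ('r, 'v, 'c) atom set" where
  "subst_query z c q = subst_atom z c ` q"

text \<open>Undirected graphs are given by sets of 2-element edges. A simple path from u to v.\<close>
definition simple_path :: "'a set set \<Rightarrow> 'a list \<Rightarrow> 'a \<Rightarrow> 'a \<Rightarrow> bool" where
  "simple_path E p u v \<longleftrightarrow> p \<noteq> [] \<and> hd p = u \<and> last p = v \<and> distinct p
     \<and> (\<forall>i. Suc i < length p \<longrightarrow> {p ! i, p ! Suc i} \<in> E)"

definition is_tree :: "'a set \<Rightarrow> 'a set set \<Rightarrow> bool" where
  "is_tree V E \<longleftrightarrow> (\<forall>e\<in>E. \<exists>u\<in>V. \<exists>v\<in>V. u \<noteq> v \<and> e = {u, v})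
     \<and> (\<forall>u\<in>V. \<forall>v\<in>V. \<exists>!p. simple_path E p u v)"

definition join_tree :: "('r, 'v, 'c) atom set \<Rightarrow> ('r, 'v, 'c) atom set set \<Rightarrow> bool" where
  "join_tree q \<tau> \<longleftrightarrow> is_tree q \<tau> \<and>
     (\<forall>F\<in>q. \<forall>G\<in>q. \<forall>x \<in> avars F \<inter> avars G. \<forall>p. simple_path \<tau> p F G \<longrightarrow>
        (\<forall>H\<in>set p. x \<in> avars H))"

definition acyclic_query :: "('r, 'v, 'c) atom set \<Rightarrow> bool" where
  "acyclic_query q \<longleftrightarrow> (\<exists>\<tau>. join_tree q \<tau>)"

text \<open>A functional dependency X \<rightarrow> Y over variables; a relation instance is a set of tuples,
  i.e. functions from variables (attributes) to values.\<close>
type_synonym 'v fd = "'v set \<times> 'v set"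

definition fd_holds :: "('v \<Rightarrow> nat) set \<Rightarrow> 'v fd \<Rightarrow> bool" where
  "fd_holds r fd \<longleftrightarrow> (\<forall>t1\<in>r. \<forall>t2\<in>r. (\<forall>x\<in>fst fd. t1 x = t2 x) \<longrightarrow> (\<forall>y\<in>snd fd. t1 y = t2 y))"

definition fd_entails :: "'v fd set \<Rightarrow> 'v fd \<Rightarrow> bool" where
  "fd_entails \<Sigma> fd \<longleftrightarrow> (\<forall>r. (\<forall>d\<in>\<Sigma>. fd_holds r d) \<longrightarrow> fd_holds r fd)"

definition FDs :: "'r signature \<Rightarrow> ('r, 'v, 'c) atom set \<Rightarrow> 'v fd set" where
  "FDs sig q = {(key sig F, avars F) | F. F \<in> q}"

definition plus_closure :: "'r signature \<Rightarrow> ('r, 'v, 'c) atom set \<Rightarrow> ('r, 'v, 'c) atom \<Rightarrow> 'v set" where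
  "plus_closure sig q F = {x \<in> qvars q. fd_entails (FDs sig (q - {F})) (key sig F, {x})}"

definition oplus_closure :: "'r signature \<Rightarrow> ('r, 'v, 'c) atom set \<Rightarrow> ('r, 'v, 'c) atom \<Rightarrow> 'v set" where
  "oplus_closure sig q F = {x \<in> qvars q. fd_entails (FDs sig q) (key sig F, {x})}"

definition attacks_via :: "'r signature \<Rightarrow> ('r, 'v, 'c) atom set \<Rightarrow> ('r, 'v, 'c) atom set set
    \<Rightarrow> ('r, 'v, 'c) atom \<Rightarrow> ('r, 'v, 'c) atom \<Rightarrow> bool" where
  "attacks_via sig q \<tau> F G \<longleftrightarrow> F \<in> q \<and> G \<in> q \<and> F \<noteq> G \<and>
     (\<forall>p. simple_path \<tau> p F G \<longrightarrow>
        (\<forall>i. Suc i < length p \<longrightarrow> \<not> (avars (p ! i) \<inter> avars (p ! Suc i) \<subseteq> plus_closure sig q F)))"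

text \<open>Attack in the attack graph of an acyclic query (the choice of join tree is irrelevant).\<close>
definition attacks :: "'r signature \<Rightarrow> ('r, 'v, 'c) atom set
    \<Rightarrow> ('r, 'v, 'c) atom \<Rightarrow> ('r, 'v, 'c) atom \<Rightarrow> bool" where
  "attacks sig q F G \<longleftrightarrow> (\<exists>\<tau>. join_tree q \<tau> \<and> attacks_via sig q \<tau> F G)"

definition weak_attack :: "'r signature \<Rightarrow> ('r, 'v, 'c) atom set
    \<Rightarrow> ('r, 'v, 'c) atom \<Rightarrow> ('r, 'v, 'c) atom \<Rightarrow> bool" where
  "weak_attack sig q F G \<longleftrightarrow> attacks sig q F G \<and> key sig G \<subseteq> oplus_closure sig q F"

end

theory Submission
  imports Defs
begin

fun cps :: "'a list \<Rightarrow> ('a \<times> 'a) set" where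
  "cps (a # b # xs) = insert (a, b) (cps (b # xs))"
| "cps _ = {}"

lemma cps_idx: "cps p = {(p ! i, p ! Suc i) | i. Suc i < length p}"
proof (induction p rule: cps.induct)
  case (1 a b xs)
  show ?case
  proof
    show "cps (a # b # xs) \<subseteq> {((a # b # xs) ! i, (a # b # xs) ! Suc i) |i. Suc i < length (a # b # xs)}"
    proof
      fix e assume "e \<in> cps (a # b # xs)"
      then have "e = (a, b) \<or> e \<in> cps (b # xs)" by simp
      then show "e \<in> {((a # b # xs) ! i, (a # b # xs) ! Suc i) |i. Suc i < length (a # b # xs)}"
      proof
        assume "e = (a, b)" then show ?thesis by force
      next
        assume "e \<in> cps (b # xs)"
        then obtain i where "Suc i < length (b # xs)" "e = ((b#xs)!i, (b#xs)!Suc i)" using 1 by blast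
        then show ?thesis by (intro CollectI exI[of _ "Suc i"]) auto
      qed
    qed
  next
    show "{((a # b # xs) ! i, (a # b # xs) ! Suc i) |i. Suc i < length (a # b # xs)} \<subseteq> cps (a # b # xs)"
    proof
      fix e assume "e \<in> {((a # b # xs) ! i, (a # b # xs) ! Suc i) |i. Suc i < length (a # b # xs)}"
      then obtain i where i: "Suc i < length (a # b # xs)" "e = ((a # b # xs) ! i, (a # b # xs) ! Suc i)" by blast
      show "e \<in> cps (a # b # xs)"
      proof (cases i)
        case 0 then show ?thesis using i by simp
      next
        case (Suc j)
        then have "e \<in> cps (b # xs)" using i 1 by auto
        then show ?thesis by simp
      qed
    qed
  qed
qed auto

lemma idx_cps: "(\<forall>(a,b)\<in>cps p. P a b) \<longleftrightarrow> (\<forall>i. Suc i < length p \<longrightarrow> P (p!i) (p!Suc i))"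
  by (auto simp: cps_idx)

lemma cps_set: "cps p \<subseteq> set p \<times> set p"
  by (induction p rule: cps.induct) auto

lemma cps_app: "cps (xs @ y # ys) = cps (xs @ [y]) \<union> cps (y # ys)"
  by (induction xs rule: cps.induct) auto

lemma cps_map: "cps (map f p) = (\<lambda>(a,b). (f a, f b)) ` cps p"
  by (induction p rule: cps.induct) auto

lemma shortcut:
  "w \<noteq> [] \<Longrightarrow> \<exists>p. p \<noteq> [] \<and> hd p = hd w \<and> last p = last w \<and> distinct p \<and> cps p \<subseteq> cps w"
proof (induction "length w" arbitrary: w rule: less_induct)
  case less
  show ?case
  proof (cases "distinct w")
    case True then show ?thesis using less.prems by blast
  next
    case False
    then obtain a x b c where w: "w = a @ [x] @ b @ [x] @ c" using not_distinct_decomp[OF False] by blast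
    let ?w = "a @ x # c"
    have len: "length ?w < length w" using w by simp
    have hd: "hd ?w = hd w" using w by (cases a) auto
    have lst: "last ?w = last w" using w by (cases c) auto
    have sub: "cps ?w \<subseteq> cps w"
    proof -
      have "cps w = cps (a @ [x]) \<union> cps (x # b @ x # c)" using w cps_app[of a x "b @ x # c"] by simp
      moreover have "cps (x # b @ x # c) = cps (x # b @ [x]) \<union> cps (x # c)" using cps_app[of "x # b" x c] by simp
      moreover have "cps ?w = cps (a @ [x]) \<union> cps (x # c)" using cps_app[of a x c] by simp
      ultimately show ?thesis by blast
    qed
    have "?w \<noteq> []" by simp
    from less.hyps[OF len this] obtain p where p: "p \<noteq> []" "hd p = hd ?w" "last p = last ?w" "distinct p" "cps p \<subseteq> cps ?w"
      by blast
    show ?thesis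
      apply (rule exI[of _ p])
      using p hd lst sub by auto
  qed
qed

lemma tree_path_set:
  assumes E: "\<forall>e\<in>E. e \<subseteq> V" and sp: "simple_path E p u v" and u: "u \<in> V"
  shows "set p \<subseteq> V"
proof
  fix x assume "x \<in> set p"
  then obtain i where i: "i < length p" "x = p ! i" by (auto simp: in_set_conv_nth)
  show "x \<in> V"
  proof (cases "Suc i < length p")
    case True
    then have "{p!i, p!Suc i} \<in> E" using sp unfolding simple_path_def by blast
    then show ?thesis using E i by blast
  next
    case False
    show ?thesis
    proof (cases i)
      case 0
      have "p \<noteq> []" "hd p = u" using sp unfolding simple_path_def by auto
      then show ?thesis using i u 0 by (metis hd_conv_nth)
    next
      case (Suc j)
      then have "{p!j, p!Suc j} \<in> E" using sp i unfolding simple_path_def by auto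
      then show ?thesis using E i Suc by blast
    qed
  qed
qed

lemma tree_edge2: "is_tree V E \<Longrightarrow> \<forall>e\<in>E. \<exists>u\<in>V. \<exists>v\<in>V. u \<noteq> v \<and> e = {u, v}"
  unfolding is_tree_def by (rule conjunct1)

lemma tree_edges: "is_tree V E \<Longrightarrow> \<forall>e\<in>E. e \<subseteq> V"
proof
  fix e assume "is_tree V E" "e \<in> E"
  then obtain u v where "u \<in> V" "v \<in> V" "e = {u,v}" using tree_edge2 by blast
  then show "e \<subseteq> V" by simp
qed

lemma tree_ex1: "is_tree V E \<Longrightarrow> \<forall>u\<in>V. \<forall>v\<in>V. \<exists>!p. simple_path E p u v"
  unfolding is_tree_def by (rule conjunct2)

lemma tree_ex:
  assumes "is_tree V E" "u \<in> V" "v \<in> V" shows "\<exists>p. simple_path E p u v"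
proof -
  have "\<exists>!p. simple_path E p u v" by (rule tree_ex1[OF assms(1), rule_format, OF assms(2,3)])
  then show ?thesis by (rule ex1_implies_ex)
qed

lemma tree_uniq:
  assumes "is_tree V E" "u \<in> V" "v \<in> V" "simple_path E p u v" "simple_path E p' u v" shows "p = p'"
proof -
  have "\<exists>!p. simple_path E p u v" by (rule tree_ex1[OF assms(1), rule_format, OF assms(2,3)])
  show ?thesis using the1_equality[OF \<open>\<exists>!p. simple_path E p u v\<close> assms(4)]
    the1_equality[OF \<open>\<exists>!p. simple_path E p u v\<close> assms(5)] by simp
qed

lemma jt_tree: "join_tree q \<tau> \<Longrightarrow> is_tree q \<tau>"
  unfolding join_tree_def by (rule conjunct1)

lemma jt_prop:
  assumes "join_tree q \<tau>" "F \<in> q" "G \<in> q" "x \<in> avars F" "x \<in> avars G" "simple_path \<tau> p F G" "H \<in> set p"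
  shows "x \<in> avars H"
proof -
  have all: "\<forall>F\<in>q. \<forall>G\<in>q. \<forall>x \<in> avars F \<inter> avars G. \<forall>p. simple_path \<tau> p F G \<longrightarrow> (\<forall>H\<in>set p. x \<in> avars H)"
    using assms(1) unfolding join_tree_def by (rule conjunct2)
  have x: "x \<in> avars F \<inter> avars G" using assms(4,5) by (rule IntI)
  show ?thesis by (rule all[rule_format, OF assms(2,3) x assms(6,7)])
qed

lemma map_surj: "set ys \<subseteq> f ` V \<Longrightarrow> \<exists>xs. set xs \<subseteq> V \<and> ys = map f xs"
proof (induction ys)
  case Nil show ?case by (rule exI[of _ "[]"]) simp
next
  case (Cons y ys)
  have "set ys \<subseteq> f ` V" using Cons.prems by simp
  then obtain xs where xs: "set xs \<subseteq> V" "ys = map f xs" using Cons.IH by blast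
  have "y \<in> f ` V" using Cons.prems by simp
  then obtain x where x: "x \<in> V" "y = f x" by blast
  have "set (x#xs) \<subseteq> V \<and> y # ys = map f (x#xs)" using xs x by simp
  then show ?case by (rule exI[of _ "x#xs"])
qed

lemma sp_map:
  assumes inj: "inj_on f V" and EV: "\<forall>e\<in>E. e \<subseteq> V" and pV: "set p \<subseteq> V" and uv: "u \<in> V" "v \<in> V"
  shows "simple_path ((`) f ` E) (map f p) (f u) (f v) \<longleftrightarrow> simple_path E p u v"
proof -
  have edge: "({f a, f b} \<in> (`) f ` E \<longleftrightarrow> {a,b} \<in> E)" if ab: "a \<in> V" "b \<in> V" for a b
  proof
    assume "{f a, f b} \<in> (`) f ` E"
    then obtain e where e: "e \<in> E" "{f a, f b} = f ` e" by blast
    have fe: "f ` e = f ` {a,b}" by (simp only: image_insert image_empty e(2))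
    have eV: "e \<subseteq> V" using EV e(1) by blast
    have abV: "{a,b} \<subseteq> V" using ab by blast
    have "e = {a,b}" by (rule iffD1[OF inj_on_image_eq_iff[OF inj eV abV] fe])
    then show "{a,b} \<in> E" using e by simp
  next
    assume "{a,b} \<in> E"
    then have "f ` {a,b} \<in> (`) f ` E" by (rule imageI)
    then show "{f a, f b} \<in> (`) f ` E" by simp
  qed
  have nth: "\<And>i. i < length p \<Longrightarrow> p ! i \<in> V" using pV by auto
  have hdV: "p \<noteq> [] \<Longrightarrow> hd p \<in> V" and lastV: "p \<noteq> [] \<Longrightarrow> last p \<in> V" using pV by auto
  have E1: "(\<forall>i. Suc i < length p \<longrightarrow> {map f p ! i, map f p ! Suc i} \<in> (`) f ` E)
     \<longleftrightarrow> (\<forall>i. Suc i < length p \<longrightarrow> {p ! i, p ! Suc i} \<in> E)"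
  proof (intro iffI allI impI)
    fix i assume H: "\<forall>i. Suc i < length p \<longrightarrow> {map f p ! i, map f p ! Suc i} \<in> (`) f ` E" and i: "Suc i < length p"
    then have "{f (p ! i), f (p ! Suc i)} \<in> (`) f ` E" by simp
    then show "{p ! i, p ! Suc i} \<in> E" using edge nth i by simp
  next
    fix i assume H: "\<forall>i. Suc i < length p \<longrightarrow> {p ! i, p ! Suc i} \<in> E" and i: "Suc i < length p"
    then have "{p ! i, p ! Suc i} \<in> E" by simp
    then show "{map f p ! i, map f p ! Suc i} \<in> (`) f ` E" using edge nth i by simp
  qed
  have D1: "distinct (map f p) \<longleftrightarrow> distinct p"
    using inj pV by (simp add: distinct_map inj_on_subset)
  have H1: "p \<noteq> [] \<longrightarrow> (f (hd p) = f u \<longleftrightarrow> hd p = u)"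
    using inj hdV uv by (meson inj_onD)
  have L1: "p \<noteq> [] \<longrightarrow> (f (last p) = f v \<longleftrightarrow> last p = v)"
    using inj lastV uv by (meson inj_onD)
  have sp': "simple_path E' (map f p) (f u) (f v) \<longleftrightarrow> p \<noteq> [] \<and> f (hd p) = f u \<and> f (last p) = f v
     \<and> distinct (map f p) \<and> (\<forall>i. Suc i < length p \<longrightarrow> {map f p ! i, map f p ! Suc i} \<in> E')" for E'
    unfolding simple_path_def by (cases "p = []") (simp_all add: hd_map last_map)
  show ?thesis unfolding sp' unfolding simple_path_def using E1 D1 H1 L1 by blast
qed

lemma sp_transport:
  assumes inj: "inj_on f V" and EV: "\<forall>e\<in>E. e \<subseteq> V" and uv: "u \<in> V" "v \<in> V"
    and sp: "simple_path ((`) f ` E) p' (f u) (f v)"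
  shows "\<exists>p. set p \<subseteq> V \<and> p' = map f p \<and> simple_path E p u v"
proof -
  have "\<forall>e\<in>(`) f ` E. e \<subseteq> f ` V" using EV by blast
  then have "set p' \<subseteq> f ` V" using tree_path_set[OF _ sp] uv by blast
  then obtain p where p: "set p \<subseteq> V" "p' = map f p" using map_surj by blast
  then show ?thesis using sp sp_map[OF inj EV p(1) uv] by blast
qed

section \<open>Substitution facts\<close>

lemma subst_term_Var: "subst_term z c t = Var v \<longleftrightarrow> t = Var v \<and> v \<noteq> z"
  by (cases t) auto

lemma tv_subst: "term_vars (map (subst_term z c) ts) = term_vars ts - {z}"
proof -
  have "Var v \<in> set (map (subst_term z c) ts) \<longleftrightarrow> Var v \<in> set ts \<and> v \<noteq> z" for v
  proof
    assume "Var v \<in> set (map (subst_term z c) ts)"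
    then obtain t where "t \<in> set ts" "subst_term z c t = Var v" by auto
    then show "Var v \<in> set ts \<and> v \<noteq> z" using subst_term_Var by metis
  next
    assume "Var v \<in> set ts \<and> v \<noteq> z"
    then have "subst_term z c (Var v) = Var v" "Var v \<in> set ts" by auto
    then show "Var v \<in> set (map (subst_term z c) ts)" by (metis image_eqI set_map)
  qed
  then show ?thesis unfolding term_vars_def by auto
qed

lemma rel_subst[simp]: "rel (subst_atom z c F) = rel F" by (cases F) auto

lemma avars_subst: "avars (subst_atom z c F) = avars F - {z}"
  by (cases F) (auto simp: avars_def tv_subst)

lemma key_subst: "key sig (subst_atom z c F) = key sig F - {z}"
  by (cases F) (simp add: key_def take_map tv_subst)

lemma inj_subst: "self_join_free q \<Longrightarrow> inj_on (subst_atom z c) q"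
  unfolding inj_on_def
proof (intro ballI impI)
  fix x y assume sj: "self_join_free q" and xy: "x \<in> q" "y \<in> q" and e: "subst_atom z c x = subst_atom z c y"
  have "rel (subst_atom z c x) = rel (subst_atom z c y)" using e by simp
  then have "rel x = rel y" by simp
  then show "x = y" using sj xy unfolding self_join_free_def by blast
qed

lemma qvars_subst: "qvars (subst_atom z c ` q) = qvars q - {z}"
  unfolding qvars_def by (auto simp: avars_subst)


lemma entails_subst:
  fixes sig :: "'r signature" and Q :: "('r, 'v, 'c) atom set" and F :: "('r, 'v, 'c) atom"
  assumes "fd_entails (FDs sig Q) (key sig F, {x})" "x \<noteq> z"
  shows "fd_entails (FDs sig (subst_atom z c ` Q)) (key sig (subst_atom z c F), {x})"
  unfolding fd_entails_def
proof (intro allI impI)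
  fix r :: "('v \<Rightarrow> nat) set"
  assume r: "\<forall>d\<in>FDs sig (subst_atom z c ` Q). fd_holds r d"
  let ?r = "(\<lambda>t. t(z := 0)) ` r"
  have "\<forall>d\<in>FDs sig Q. fd_holds ?r d"
  proof
    fix d assume "d \<in> FDs sig Q"
    then obtain H where H: "H \<in> Q" "d = (key sig H, avars H)" unfolding FDs_def by blast
    have "(key sig (subst_atom z c H), avars (subst_atom z c H)) \<in> FDs sig (subst_atom z c ` Q)"
      unfolding FDs_def using H(1) by blast
    then have hr: "fd_holds r (key sig H - {z}, avars H - {z})"
      using r by (simp add: key_subst avars_subst)
    show "fd_holds ?r d" unfolding H(2) fd_holds_def
    proof (intro ballI impI)
      fix s1 s2 y assume s: "s1 \<in> ?r" "s2 \<in> ?r" and agree: "\<forall>x\<in>fst (key sig H, avars H). s1 x = s2 x"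
        and y: "y \<in> snd (key sig H, avars H)"
      obtain t1 t2 where t: "t1 \<in> r" "t2 \<in> r" "s1 = t1(z:=0)" "s2 = t2(z:=0)" using s by blast
      have "\<forall>x\<in>key sig H - {z}. t1 x = t2 x"
      proof
        fix w assume w: "w \<in> key sig H - {z}"
        then have "s1 w = s2 w" using agree by auto
        then show "t1 w = t2 w" using t w by simp
      qed
      then have "\<forall>x\<in>avars H - {z}. t1 x = t2 x" using hr t unfolding fd_holds_def by auto
      then show "s1 y = s2 y" using t y by auto
    qed
  qed
  then have h: "fd_holds ?r (key sig F, {x})" using assms(1) unfolding fd_entails_def by blast
  show "fd_holds r (key sig (subst_atom z c F), {x})" unfolding fd_holds_def key_subst
  proof (intro ballI impI)
    fix t1 t2 y assume t: "t1 \<in> r" "t2 \<in> r" and ag: "\<forall>x\<in>fst (key sig F - {z}, {x}). t1 x = t2 x"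
      and y: "y \<in> snd (key sig F - {z}, {x})"
    have "\<forall>w\<in>key sig F. (t1(z:=0)) w = (t2(z:=0)) w" using ag by auto
    moreover have "t1(z:=0) \<in> ?r" "t2(z:=0) \<in> ?r" using t by auto
    moreover have h': "\<forall>s1\<in>?r. \<forall>s2\<in>?r. (\<forall>w\<in>key sig F. s1 w = s2 w) \<longrightarrow> s1 x = s2 x"
      using h unfolding fd_holds_def fst_conv snd_conv by blast
    ultimately have "(t1(z:=0)) x = (t2(z:=0)) x" by blast
    then show "t1 y = t2 y" using y assms(2) by simp
  qed
qed

lemma diff_subst:
  assumes "inj_on (subst_atom z c) q" "F \<in> q"
  shows "subst_atom z c ` q - {subst_atom z c F} = subst_atom z c ` (q - {F})"
proof
  show "subst_atom z c ` q - {subst_atom z c F} \<subseteq> subst_atom z c ` (q - {F})" by blast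
next
  show "subst_atom z c ` (q - {F}) \<subseteq> subst_atom z c ` q - {subst_atom z c F}"
  proof
    fix y assume "y \<in> subst_atom z c ` (q - {F})"
    then obtain H where H: "H \<in> q" "H \<noteq> F" "y = subst_atom z c H" by blast
    then have "subst_atom z c H \<noteq> subst_atom z c F" using assms by (meson inj_onD)
    then show "y \<in> subst_atom z c ` q - {subst_atom z c F}" using H by auto
  qed
qed

lemma plus_subst:
  assumes inj: "inj_on (subst_atom z c) q" and F: "F \<in> q"
    and x: "x \<in> plus_closure sig q F" "x \<noteq> z"
  shows "x \<in> plus_closure sig (subst_atom z c ` q) (subst_atom z c F)"
  using x entails_subst[of sig "q - {F}" F x z c] diff_subst[OF inj F]
  unfolding plus_closure_def by (simp add: qvars_subst)

lemma oplus_subst: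
  assumes x: "x \<in> oplus_closure sig q F" "x \<noteq> z"
  shows "x \<in> oplus_closure sig (subst_atom z c ` q) (subst_atom z c F)"
  using x entails_subst[of sig q F x z c]
  unfolding oplus_closure_def by (simp add: qvars_subst)

lemma acyc_subst:
  assumes inj: "inj_on (subst_atom z c) q" and jt: "join_tree q \<tau>"
  shows "join_tree (subst_atom z c ` q) ((`) (subst_atom z c) ` \<tau>)"
proof -
  let ?f = "subst_atom z c"
  let ?t = "(`) ?f ` \<tau>"
  have tr: "is_tree q \<tau>" using jt by (rule jt_tree)
  have EV: "\<forall>e\<in>\<tau>. e \<subseteq> q" using tree_edges[OF tr] .
  have edges: "\<forall>e\<in>?t. \<exists>u\<in>?f ` q. \<exists>v\<in>?f ` q. u \<noteq> v \<and> e = {u, v}"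
  proof
    fix e' assume "e' \<in> ?t"
    then obtain e where e: "e \<in> \<tau>" "e' = ?f ` e" by blast
    then obtain u v where uv: "u \<in> q" "v \<in> q" "u \<noteq> v" "e = {u,v}" using tree_edge2[OF tr] by blast
    then have "?f u \<noteq> ?f v" using inj by (meson inj_onD)
    then show "\<exists>u\<in>?f ` q. \<exists>v\<in>?f ` q. u \<noteq> v \<and> e' = {u, v}" using e uv by auto
  qed
  have uniq: "\<forall>u\<in>?f ` q. \<forall>v\<in>?f ` q. \<exists>!p. simple_path ?t p u v"
  proof (intro ballI)
    fix u' v' assume "u' \<in> ?f ` q" "v' \<in> ?f ` q"
    then obtain u v where uv: "u \<in> q" "v \<in> q" "u' = ?f u" "v' = ?f v" by blast
    obtain p where p: "simple_path \<tau> p u v" using tree_ex[OF tr uv(1,2)] by blast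
    have pq: "set p \<subseteq> q" using tree_path_set[OF EV p uv(1)] .
    have p': "simple_path ?t (map ?f p) u' v'" using sp_map[OF inj EV pq uv(1,2)] p uv by simp
    show "\<exists>!p. simple_path ?t p u' v'"
    proof (rule ex1I)
      show "simple_path ?t (map ?f p) u' v'" by (rule p')
    next
      fix p2 assume "simple_path ?t p2 u' v'"
      then obtain p0 where p0: "set p0 \<subseteq> q" "p2 = map ?f p0" "simple_path \<tau> p0 u v"
        using sp_transport[OF inj EV uv(1,2)] uv by blast
      have "p0 = p" using tree_uniq[OF tr uv(1,2) p0(3) p] .
      then show "p2 = map ?f p" using p0 by simp
    qed
  qed
  have jp: "\<forall>F'\<in>?f ` q. \<forall>G'\<in>?f ` q. \<forall>x \<in> avars F' \<inter> avars G'. \<forall>p'. simple_path ?t p' F' G' \<longrightarrow>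
        (\<forall>H'\<in>set p'. x \<in> avars H')"
  proof (intro ballI allI impI)
    fix F' G' x p' H'
    assume FG: "F' \<in> ?f ` q" "G' \<in> ?f ` q" and x: "x \<in> avars F' \<inter> avars G'"
      and sp: "simple_path ?t p' F' G'" and H': "H' \<in> set p'"
    obtain F G where FG': "F \<in> q" "G \<in> q" "F' = ?f F" "G' = ?f G" using FG by blast
    obtain p0 where p0: "set p0 \<subseteq> q" "p' = map ?f p0" "simple_path \<tau> p0 F G"
      using sp_transport[OF inj EV FG'(1,2)] sp FG' by blast
    obtain H where H: "H \<in> set p0" "H' = ?f H" using H' p0 by auto
    have xz: "x \<in> avars F" "x \<in> avars G" "x \<noteq> z" using x FG' by (auto simp: avars_subst)
    have "x \<in> avars H" using jt_prop[OF jt FG'(1,2) xz(1,2) p0(3) H(1)] .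
    then show "x \<in> avars H'" using H xz by (simp add: avars_subst)
  qed
  have "is_tree (?f ` q) ?t" unfolding is_tree_def using edges uniq by (rule conjI)
  then show ?thesis unfolding join_tree_def using jp by (rule conjI)
qed

lemma walk_chain:
  assumes jt: "join_tree q \<tau>"
  shows "hs \<noteq> [] \<Longrightarrow> set hs \<subseteq> q \<Longrightarrow> \<forall>(a,b)\<in>cps hs. \<not> (avars a \<inter> avars b \<subseteq> S) \<Longrightarrow>
    \<exists>w. w \<noteq> [] \<and> hd w = hd hs \<and> last w = last hs \<and> (\<forall>(a,b)\<in>cps w. {a,b} \<in> \<tau> \<and> \<not> (avars a \<inter> avars b \<subseteq> S))"
proof (induction hs rule: cps.induct)
  case (1 a b xs)
  then obtain w where w: "w \<noteq> []" "hd w = b" "last w = last (b # xs)"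
    "\<forall>(a,b)\<in>cps w. {a,b} \<in> \<tau> \<and> \<not> (avars a \<inter> avars b \<subseteq> S)" by auto
  have ab: "a \<in> q" "b \<in> q" using "1.prems" by auto
  have lab: "\<not> (avars a \<inter> avars b \<subseteq> S)" using "1.prems" by simp
  then obtain y where y: "y \<in> avars a" "y \<in> avars b" "y \<notin> S" by blast
  obtain P where P: "simple_path \<tau> P a b" using tree_ex[OF jt_tree[OF jt] ab] by blast
  have Py: "\<forall>H\<in>set P. y \<in> avars H" using jt_prop[OF jt ab y(1,2) P] by blast
  have Pe1: "\<forall>(u,v)\<in>cps P. {u,v} \<in> \<tau>" using P unfolding simple_path_def idx_cps by blast
  have Pe: "\<forall>(u,v)\<in>cps P. {u,v} \<in> \<tau> \<and> \<not> (avars u \<inter> avars v \<subseteq> S)"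
  proof (intro ballI)
    fix e assume e: "e \<in> cps P"
    obtain u v where uv: "e = (u,v)" by (cases e)
    have "u \<in> set P" "v \<in> set P" using e uv cps_set by blast+
    then have "y \<in> avars u \<inter> avars v" using Py by blast
    then show "case e of (u,v) \<Rightarrow> {u,v} \<in> \<tau> \<and> \<not> (avars u \<inter> avars v \<subseteq> S)"
      using uv Pe1 e y(3) by auto
  qed
  have Pne: "P \<noteq> []" "hd P = a" "last P = b" using P unfolding simple_path_def by auto
  let ?w = "P @ tl w"
  have "butlast P @ [last P] = P" using Pne(1) by (rule append_butlast_last_id)
  then have P_eq: "butlast P @ [hd w] = P" using Pne(3) w(2) by simp
  have "?w = (butlast P @ [hd w]) @ tl w" by (simp only: P_eq)
  also have "\<dots> = butlast P @ hd w # tl w" by simp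
  finally have eq: "?w = butlast P @ hd w # tl w" .
  have "cps ?w = cps (butlast P @ [hd w]) \<union> cps (hd w # tl w)" unfolding eq by (rule cps_app)
  also have "butlast P @ [hd w] = P" by (rule P_eq)
  also have "hd w # tl w = w" using w(1) by simp
  finally have cw: "cps ?w = cps P \<union> cps w" .
  have hdw: "hd ?w = a" using Pne by simp
  have lw: "last ?w = last (a # b # xs)"
  proof (cases "tl w = []")
    case True
    then have "w = [b]" using w(1,2) by (metis list.collapse)
    then show ?thesis using Pne w by simp
  next
    case False then show ?thesis using w by (simp add: last_tl)
  qed
  have all: "\<forall>(u,v)\<in>cps ?w. {u,v} \<in> \<tau> \<and> \<not> (avars u \<inter> avars v \<subseteq> S)"
    unfolding cw using Pe w(4) by blast
  show ?case
  proof (intro exI conjI)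
    show "?w \<noteq> []" using Pne by simp
    show "hd ?w = hd (a # b # xs)" using hdw by simp
    show "last ?w = last (a # b # xs)" by (rule lw)
    show "\<forall>(u,v)\<in>cps ?w. {u,v} \<in> \<tau> \<and> \<not> (avars u \<inter> avars v \<subseteq> S)" by (rule all)
  qed
next
  case "2_1" then show ?case by simp
next
  case ("2_2" v) show ?case by (rule exI[of _ "[v]"]) simp
qed

theorem lemma5:
  fixes sig :: "'r signature"
    and q :: "('r, 'v, 'c) atom set"
    and F G :: "('r, 'v, 'c) atom"
    and z :: 'v and c :: 'c
  assumes "wf_query sig q"
    and "acyclic_query q"
    and "self_join_free q"
    and "F \<in> q" and "G \<in> q"
    and "z \<in> qvars q"
  shows "acyclic_query (subst_query z c q)
    \<and> (attacks sig (subst_query z c q) (subst_atom z c F) (subst_atom z c G)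
         \<longrightarrow> attacks sig q F G)
    \<and> (attacks sig (subst_query z c q) (subst_atom z c F) (subst_atom z c G)
         \<and> weak_attack sig q F G
         \<longrightarrow> weak_attack sig (subst_query z c q) (subst_atom z c F) (subst_atom z c G))"
proof -
  let ?f = "subst_atom z c"
  let ?q = "subst_query z c q"
  have q': "?q = ?f ` q" by (simp add: subst_query_def)
  have inj: "inj_on ?f q" using inj_subst assms(3) .
  obtain \<tau> where jt: "join_tree q \<tau>" using assms(2) unfolding acyclic_query_def by blast
  have P1: "acyclic_query ?q" unfolding acyclic_query_def q' using acyc_subst[OF inj jt] by blast
  have P2: "attacks sig q F G" if att: "attacks sig ?q (?f F) (?f G)"
  proof -
    obtain \<tau>' where jt': "join_tree ?q \<tau>'" and av: "attacks_via sig ?q \<tau>' (?f F) (?f G)"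
      using att unfolding attacks_def by blast
    have tr': "is_tree ?q \<tau>'" using jt' by (rule jt_tree)
    have FG': "?f F \<in> ?q" "?f G \<in> ?q" using assms(4,5) q' by auto
    obtain p' where p': "simple_path \<tau>' p' (?f F) (?f G)" using tree_ex[OF tr' FG'] by blast
    have lab': "\<forall>i. Suc i < length p' \<longrightarrow> \<not> (avars (p'!i) \<inter> avars (p'!Suc i) \<subseteq> plus_closure sig ?q (?f F))"
      using av p' unfolding attacks_via_def by blast
    have neq: "F \<noteq> G" using av unfolding attacks_via_def by auto
    have "set p' \<subseteq> ?q" using tree_path_set[OF tree_edges[OF tr'] p' FG'(1)] .
    then have "set p' \<subseteq> ?f ` q" using q' by simp
    then obtain hs where hs: "set hs \<subseteq> q" "p' = map ?f hs" using map_surj by blast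
    have pne: "p' \<noteq> []" "hd p' = ?f F" "last p' = ?f G" using p' unfolding simple_path_def by auto
    have hne: "hs \<noteq> []" using pne hs by auto
    have "?f (hd hs) = ?f F" using pne hs hne by (simp add: hd_map)
    moreover have "hd hs \<in> q" using hs(1) hne by auto
    ultimately have hdh: "hd hs = F" using inj assms(4) by (meson inj_onD)
    have "?f (last hs) = ?f G" using pne hs hne by (simp add: last_map)
    moreover have "last hs \<in> q" using hs(1) hne by auto
    ultimately have lh: "last hs = G" using inj assms(5) by (meson inj_onD)
    have labh: "\<forall>(a,b)\<in>cps hs. \<not> (avars a \<inter> avars b \<subseteq> plus_closure sig q F)"
    proof (intro ballI)
      fix e assume e: "e \<in> cps hs"
      obtain a b where ab: "e = (a,b)" by (cases e)
      have "(?f a, ?f b) \<in> (\<lambda>(a,b). (?f a, ?f b)) ` cps hs" using e ab by force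
      then have "(?f a, ?f b) \<in> cps p'" using hs(2) cps_map[of ?f hs] by simp
      then have "\<not> (avars (?f a) \<inter> avars (?f b) \<subseteq> plus_closure sig ?q (?f F))"
        using lab' idx_cps[of p' "\<lambda>a b. \<not> (avars a \<inter> avars b \<subseteq> plus_closure sig ?q (?f F))"] by blast
      then obtain x where x: "x \<in> avars a" "x \<in> avars b" "x \<noteq> z" "x \<notin> plus_closure sig ?q (?f F)"
        by (auto simp: avars_subst)
      have "x \<notin> plus_closure sig q F"
      proof
        assume "x \<in> plus_closure sig q F"
        then have "x \<in> plus_closure sig (?f ` q) (?f F)" using plus_subst[OF inj assms(4)] x(3) by blast
        then show False using x(4) q' by simp
      qed
      then show "case e of (a,b) \<Rightarrow> \<not> (avars a \<inter> avars b \<subseteq> plus_closure sig q F)" using ab x by auto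
    qed
    obtain w where w: "w \<noteq> []" "hd w = F" "last w = G"
      "\<forall>(a,b)\<in>cps w. {a,b} \<in> \<tau> \<and> \<not> (avars a \<inter> avars b \<subseteq> plus_closure sig q F)"
      using walk_chain[OF jt hne hs(1) labh] hdh lh by blast
    obtain p0 where p0: "p0 \<noteq> []" "hd p0 = F" "last p0 = G" "distinct p0" "cps p0 \<subseteq> cps w"
      using shortcut[OF w(1)] w by auto
    have p0e: "\<forall>(a,b)\<in>cps p0. {a,b} \<in> \<tau> \<and> \<not> (avars a \<inter> avars b \<subseteq> plus_closure sig q F)"
      using p0(5) w(4) by blast
    have "\<forall>(a,b)\<in>cps p0. {a,b} \<in> \<tau>" using p0e by blast
    then have sp0: "simple_path \<tau> p0 F G" unfolding simple_path_def using p0 idx_cps[of p0 "\<lambda>a b. {a,b} \<in> \<tau>"] by auto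
    have tr: "is_tree q \<tau>" using jt by (rule jt_tree)
    have "attacks_via sig q \<tau> F G" unfolding attacks_via_def
    proof (intro conjI allI impI)
      show "F \<in> q" "G \<in> q" "F \<noteq> G" using assms neq by auto
      fix p i assume sp: "simple_path \<tau> p F G" and i: "Suc i < length p"
      have "p = p0" using tree_uniq[OF tr assms(4,5) sp sp0] .
      then show "\<not> (avars (p ! i) \<inter> avars (p ! Suc i) \<subseteq> plus_closure sig q F)"
        using p0e i idx_cps[of p0 "\<lambda>a b. \<not> (avars a \<inter> avars b \<subseteq> plus_closure sig q F)"] by blast
    qed
    then show ?thesis unfolding attacks_def using jt by blast
  qed
  have P3: "weak_attack sig ?q (?f F) (?f G)" if att: "attacks sig ?q (?f F) (?f G)" and wk: "weak_attack sig q F G"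
  proof -
    have "key sig (?f G) \<subseteq> oplus_closure sig ?q (?f F)"
    proof
      fix x assume "x \<in> key sig (?f G)"
      then have x: "x \<in> key sig G" "x \<noteq> z" by (auto simp: key_subst)
      have xo: "x \<in> oplus_closure sig q F" using wk x(1) unfolding weak_attack_def by blast
      have "x \<in> oplus_closure sig (?f ` q) (?f F)" by (rule oplus_subst[OF xo x(2)])
      then show "x \<in> oplus_closure sig ?q (?f F)" using q' by simp
    qed
    then show ?thesis using att unfolding weak_attack_def by blast
  qed
  show ?thesis using P1 P2 P3 by blast
qed

end
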